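(* The map $\phi:\mathcal{B}\to\mathrm{GL}(2,\mathbb{Z}[t,t^{-1},(1+t)^{-1}])$ is an injective group homomorphism satisfying $\det\phi(A)=\det A$ for all $A\in\mathcal{B}$.
   Context: For a matrix $A$ with Laurent polynomial entries, $\overline{A}$ denotes the matrix obtained by substituting $t\mapsto t^{-1}$ in every entry. Let $J_3=\begin{pmatrix}1&-t^{-1}&-t^{-1}\\-t&1&-t^{-1}\\-t&-t&1\end{pmatrix}$, $v=(t,t^2,t^3)$ (a row vector) and $\vec{1}=(1,1,1)^T$. The formal Burau group is $\mathcal{B}=\{A\in\mathrm{GL}(3,\mathbb{Z}[t,t^{-1}]) : vA=v,\ A\vec 1=\vec 1,\ \overline{A}J_3A^T=J_3\}$. For $A=(A_{ij})\in\mathcal{B}$ put, for $k=1,2$, $f_{k1}=A_{k1}(1+t+t^2)-1$, $f_{k2}=A_{k1}+A_{k2}(1+t)-1$, and $g_{kl}=f_{kl}/(t(1+t))$. Define $\phi(A)=\begin{pmatrix}g_{11}&g_{12}\\ t^{-1}g_{11}+(1+t)g_{21}& t^{-1}g_{12}+(1+t)g_{22}\end{pmatrix}$. *)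

theory Defs
  imports "HOL-Analysis.Analysis" "HOL-Computational_Algebra.Formal_Laurent_Series"
begin

text \<open>The ring Z[t,t^-1] is the subring of integer-coefficient, finitely supported series;
  Z[t,t^-1,(1+t)^-1] is obtained by additionally inverting 1+t.\<close>

type_synonym K = "rat fls"

definition tt :: K where "tt = fls_X"

definition laurent :: "K set" where
  "laurent = {f. finite {n. fls_nth f n \<noteq> 0} \<and> (\<forall>n. fls_nth f n \<in> \<int>)}"

definition laurent_loc :: "K set" where
  "laurent_loc = {p * inverse ((1 + tt) ^ m) | p m. p \<in> laurent}"

text \<open>Bar involution t \<mapsto> t^-1 (meaningful on Laurent polynomials).\<close>
definition bar :: "K \<Rightarrow> K" where
  "bar f = Abs_fls (\<lambda>n. fls_nth f (- n))"

definition bar_mat :: "K^'n^'m \<Rightarrow> K^'n^'m" where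
  "bar_mat A = (\<chi> i j. bar (A $ i $ j))"

definition GL_over :: "K set \<Rightarrow> (K^'n^'n) set" where
  "GL_over S = {A. (\<forall>i j. A $ i $ j \<in> S) \<and>
      (\<exists>B. (\<forall>i j. B $ i $ j \<in> S) \<and> A ** B = mat 1 \<and> B ** A = mat 1)}"

definition J3 :: "K^3^3" where
  "J3 = vector [vector [1, - inverse tt, - inverse tt],
                vector [- tt, 1, - inverse tt],
                vector [- tt, - tt, 1]]"

definition vrow :: "K^3" where
  "vrow = vector [tt, tt^2, tt^3]"

definition ones3 :: "K^3" where
  "ones3 = vector [1, 1, 1]"

definition burau :: "(K^3^3) set" where
  "burau = {A \<in> GL_over laurent. vrow v* A = vrow \<and> A *v ones3 = ones3 \<and>
                bar_mat A ** J3 ** transpose A = J3}"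

definition fk1 :: "K^3^3 \<Rightarrow> 3 \<Rightarrow> K" where
  "fk1 A k = A $ k $ 1 * (1 + tt + tt^2) - 1"

definition fk2 :: "K^3^3 \<Rightarrow> 3 \<Rightarrow> K" where
  "fk2 A k = A $ k $ 1 + A $ k $ 2 * (1 + tt) - 1"

definition g1 :: "K^3^3 \<Rightarrow> 3 \<Rightarrow> K" where
  "g1 A k = fk1 A k / (tt * (1 + tt))"

definition g2 :: "K^3^3 \<Rightarrow> 3 \<Rightarrow> K" where
  "g2 A k = fk2 A k / (tt * (1 + tt))"

definition phi :: "K^3^3 \<Rightarrow> K^2^2" where
  "phi A = vector [vector [g1 A 1, g2 A 1],
                   vector [inverse tt * g1 A 1 + (1 + tt) * g1 A 2,
                           inverse tt * g2 A 1 + (1 + tt) * g2 A 2]]"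

end

theory Submission
  imports Defs
begin


lemma laurent_iff: "f \<in> laurent \<longleftrightarrow> (\<exists>N. \<forall>n>N. fls_nth f n = 0) \<and> (\<forall>n. fls_nth f n \<in> \<int>)"
proof
  assume a: "f \<in> laurent"
  then have fin: "finite {n. fls_nth f n \<noteq> 0}" and z: "\<forall>n. fls_nth f n \<in> \<int>" by (auto simp: laurent_def)
  from bdd_above_finite[OF fin] obtain N where "\<forall>n\<in>{n. fls_nth f n \<noteq> 0}. n \<le> N"
    unfolding bdd_above_def by blast
  then have "\<forall>n>N. fls_nth f n = 0" by force
  with z show "(\<exists>N. \<forall>n>N. fls_nth f n = 0) \<and> (\<forall>n. fls_nth f n \<in> \<int>)" by blast
next
  assume a: "(\<exists>N. \<forall>n>N. fls_nth f n = 0) \<and> (\<forall>n. fls_nth f n \<in> \<int>)"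
  then obtain N where N: "\<forall>n>N. fls_nth f n = 0" by blast
  have "{n. fls_nth f n \<noteq> 0} \<subseteq> {fls_subdegree f..N}"
  proof
    fix n assume "n \<in> {n. fls_nth f n \<noteq> 0}"
    then have "fls_nth f n \<noteq> 0" by simp
    then have "\<not> n < fls_subdegree f" "\<not> n > N" using N fls_eq0_below_subdegree by metis+
    then show "n \<in> {fls_subdegree f..N}" by simp
  qed
  then have "finite {n. fls_nth f n \<noteq> 0}" using finite_subset by blast
  with a show "f \<in> laurent" by (simp add: laurent_def)
qed

lemma laurent_add: "f \<in> laurent \<Longrightarrow> g \<in> laurent \<Longrightarrow> f + g \<in> laurent"
  unfolding laurent_iff
  apply (elim conjE exE)
  subgoal for N M
    apply (intro conjI exI[of _ "max N M"])
    apply auto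
    done
  done

lemma laurent_uminus: "f \<in> laurent \<Longrightarrow> - f \<in> laurent"
  unfolding laurent_iff by auto

lemma laurent_diff: "f \<in> laurent \<Longrightarrow> g \<in> laurent \<Longrightarrow> f - g \<in> laurent"
  using laurent_add[of f "-g"] laurent_uminus[of g] by simp

lemma laurent_mult: "f \<in> laurent \<Longrightarrow> g \<in> laurent \<Longrightarrow> f * g \<in> laurent"
proof -
  assume "f \<in> laurent" "g \<in> laurent"
  then obtain N M where N: "\<forall>n>N. fls_nth f n = 0" and M: "\<forall>n>M. fls_nth g n = 0"
    and zf: "\<forall>n. fls_nth f n \<in> \<int>" and zg: "\<forall>n. fls_nth g n \<in> \<int>" unfolding laurent_iff by blast
  have "\<forall>n>N+M. fls_nth (f*g) n = 0"
  proof (intro allI impI)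
    fix n :: int assume "n > N + M"
    have z: "fls_nth f i * fls_nth g (n-i) = 0" for i
    proof (cases "i > N")
      case True then show ?thesis using N by simp
    next
      case False then have "n - i > M" using \<open>n > N + M\<close> by linarith
      then show ?thesis using M by simp
    qed
    show "fls_nth (f*g) n = 0" unfolding fls_times_nth(2) using z by (intro sum.neutral) blast
  qed
  moreover have "\<forall>n. fls_nth (f*g) n \<in> \<int>"
    using zf zg unfolding fls_times_nth(2) by (intro allI Ints_sum Ints_mult) auto
  ultimately show ?thesis unfolding laurent_iff by blast
qed

lemma laurent_one: "1 \<in> laurent"
  unfolding laurent_iff by (auto intro: exI[of _ 0])

lemma laurent_tt: "tt \<in> laurent"
  unfolding laurent_iff tt_def by (auto intro: exI[of _ 1])

lemma laurent_itt: "inverse tt \<in> laurent"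
  unfolding laurent_iff tt_def fls_inverse_X by (auto intro: exI[of _ 0])

lemma laurent_power: "f \<in> laurent \<Longrightarrow> f ^ n \<in> laurent"
  by (induction n) (auto intro: laurent_mult laurent_one)

lemma loc_of: "f \<in> laurent \<Longrightarrow> f \<in> laurent_loc"
  unfolding laurent_loc_def by (rule CollectI, rule exI[of _ f], rule exI[of _ 0]) simp

lemma loc_iu: "inverse (1 + tt) \<in> laurent_loc"
  unfolding laurent_loc_def by (rule CollectI, rule exI[of _ 1], rule exI[of _ 1]) (simp add: laurent_one)

lemma loc_intro: "p \<in> laurent \<Longrightarrow> f = p * inverse((1+tt)^m) \<Longrightarrow> f \<in> laurent_loc"
  unfolding laurent_loc_def mem_Collect_eq by (intro exI[of _ p] exI[of _ m] conjI)

lemma aux_frac: fixes a b a' b' p q :: "'a::comm_ring_1"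
  assumes "a*a' = 1" "b*b' = 1" shows "p*b' + q*a' = (p*a + q*b)*(b'*a')"
proof -
  have "(p*a + q*b)*(b'*a') = p*b'*(a*a') + q*a'*(b*b')" by (simp add: algebra_simps)
  then show ?thesis using assms by simp
qed

lemma loc_add: "f \<in> laurent_loc \<Longrightarrow> g \<in> laurent_loc \<Longrightarrow> f + g \<in> laurent_loc"
proof -
  assume "f \<in> laurent_loc" "g \<in> laurent_loc"
  then obtain p m q k where p: "p \<in> laurent" "f = p * inverse ((1+tt)^m)"
    and q: "q \<in> laurent" "g = q * inverse ((1+tt)^k)" unfolding laurent_loc_def by blast
  have nz: "1 + tt \<noteq> 0"
  proof
    assume "1 + tt = 0"
    then have "fls_nth (1 + tt) 0 = 0" by simp
    then show False unfolding tt_def by simp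
  qed
  have "f + g = (p * (1+tt)^k + q * (1+tt)^m) * inverse ((1+tt)^(m+k))"
  proof -
    have e: "inverse ((1+tt)^(m+k)) = inverse ((1+tt)^m) * inverse ((1+tt)^k)"
      by (simp add: power_add)
    have a: "(1+tt)^k * inverse ((1+tt)^k) = 1" "(1+tt)^m * inverse ((1+tt)^m) = 1"
      using nz by simp_all
    show ?thesis unfolding p q e by (rule aux_frac[OF a])
  qed
  moreover have "p * (1+tt)^k + q * (1+tt)^m \<in> laurent"
    by (intro laurent_add laurent_mult laurent_power p q laurent_one laurent_tt)
  ultimately show ?thesis by (metis loc_intro)
qed

lemma loc_mult: "f \<in> laurent_loc \<Longrightarrow> g \<in> laurent_loc \<Longrightarrow> f * g \<in> laurent_loc"
proof -
  assume "f \<in> laurent_loc" "g \<in> laurent_loc"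
  then obtain p m q k where p: "p \<in> laurent" "f = p * inverse ((1+tt)^m)"
    and q: "q \<in> laurent" "g = q * inverse ((1+tt)^k)" unfolding laurent_loc_def by blast
  have "f * g = (p * q) * inverse ((1+tt)^(m+k))"
    unfolding p q power_add inverse_mult_distrib by (simp only: mult_ac)
  moreover have "p * q \<in> laurent" by (intro laurent_mult p q)
  ultimately show ?thesis by (metis loc_intro)
qed



lemma tt_nz: "tt \<noteq> 0" "1 + tt \<noteq> 0" "1 + tt + tt^2 \<noteq> 0"
proof -
  show "tt \<noteq> 0" unfolding tt_def by simp
  have "fls_nth (1 + tt) 0 = 1" unfolding tt_def by simp
  then show "1 + tt \<noteq> 0" by (metis fls_zero_nth zero_neq_one)
  have "fls_nth (1 + tt + tt^2) 0 = 1" unfolding tt_def by simp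
  then show "1 + tt + tt^2 \<noteq> 0" by (metis fls_zero_nth zero_neq_one)
qed

lemma cons:
  fixes A :: "K^3^3"
  assumes "vrow v* A = vrow" "A *v ones3 = ones3"
  shows "A$1$3 = 1 - A$1$1 - A$1$2" "A$2$3 = 1 - A$2$1 - A$2$2" "A$3$3 = 1 - A$3$1 - A$3$2"
    "A$3$1 = (tt - tt*A$1$1 - tt^2*A$2$1)/tt^3" "A$3$2 = (tt^2 - tt*A$1$2 - tt^2*A$2$2)/tt^3"
proof -
  have o: "ones3 $ i = 1" for i using exhaust_3[of i] by (auto simp: ones3_def)
  have r: "A$i$1 + A$i$2 + A$i$3 = 1" for i
    using arg_cong[OF assms(2), of "\<lambda>x. x$i"] by (simp add: matrix_vector_mult_def sum_3 o)
  have c: "tt * A$1$j + tt^2 * A$2$j + tt^3 * A$3$j = vrow $ j" for j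
    using arg_cong[OF assms(1), of "\<lambda>x. x$j"] by (simp add: vector_matrix_mult_def sum_3 vrow_def)
  show "A$1$3 = 1 - A$1$1 - A$1$2" "A$2$3 = 1 - A$2$1 - A$2$2" "A$3$3 = 1 - A$3$1 - A$3$2"
    using r[of 1] r[of 2] r[of 3] by (simp_all add: algebra_simps)
  have "tt^3 \<noteq> 0" using tt_nz by simp
  then show "A$3$1 = (tt - tt*A$1$1 - tt^2*A$2$1)/tt^3" "A$3$2 = (tt^2 - tt*A$1$2 - tt^2*A$2$2)/tt^3"
    using c[of 1] c[of 2] by (simp_all add: field_simps vrow_def)
qed

lemma cons':
  fixes A :: "K^3^3"
  assumes "vrow v* A = vrow" "A *v ones3 = ones3"
  shows "A$1$3 = 1 - A$1$1 - A$1$2" "A$2$3 = 1 - A$2$1 - A$2$2" "A$3$3 = 1 - A$3$1 - A$3$2"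
    "A$3$1 = (tt - tt*A$1$1 - tt^2*A$2$1)*(inverse tt)^3" "A$3$2 = (tt^2 - tt*A$1$2 - tt^2*A$2$2)*(inverse tt)^3"
  using cons[OF assms] by (simp_all add: divide_inverse power_inverse)

lemma ginv: "x / (tt * (1 + tt)) = x * inverse tt * inverse (1+tt)"
  by (simp add: divide_inverse)

lemma hom:
  fixes A B :: "K^3^3"
  assumes "vrow v* A = vrow" "A *v ones3 = ones3" "vrow v* B = vrow" "B *v ones3 = ones3"
  shows "phi (A ** B) = phi A ** phi B"
proof -
  note ca = cons'[OF assms(1,2)] and cb = cons'[OF assms(3,4)]
  have w: "tt * inverse tt = 1" and u: "(1+tt) * inverse (1+tt) = 1" using tt_nz by auto
  show ?thesis
    unfolding vec_eq_iff forall_2 phi_def g1_def g2_def fk1_def fk2_def ginv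
    apply (simp add: matrix_matrix_mult_def sum_2 sum_3 ca cb)
    using w u apply algebra+
    done
qed


lemma det_eq:
  fixes A :: "K^3^3"
  assumes "vrow v* A = vrow" "A *v ones3 = ones3"
  shows "det (phi A) = det A"
proof -
  note ca = cons'[OF assms(1,2)]
  have w: "tt * inverse tt = 1" and u: "(1+tt) * inverse (1+tt) = 1" using tt_nz by auto
  show ?thesis
    unfolding det_2 det_3 phi_def g1_def g2_def fk1_def fk2_def ginv
    apply (simp add: ca)
    using w u by algebra
qed

lemma phi_one: "phi (mat 1) = mat 1"
proof -
  have w: "tt * inverse tt = 1" and u: "(1+tt) * inverse (1+tt) = 1" using tt_nz by auto
  show ?thesis
    unfolding vec_eq_iff forall_2 phi_def g1_def g2_def fk1_def fk2_def ginv
    apply (simp add: mat_def)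
    using w u apply algebra+
    done
qed

lemma phi_inj:
  fixes A B :: "K^3^3"
  assumes "vrow v* A = vrow" "A *v ones3 = ones3" "vrow v* B = vrow" "B *v ones3 = ones3"
    and eq: "phi A = phi B"
  shows "A = B"
proof -
  note ca = cons'[OF assms(1,2)] and cb = cons'[OF assms(3,4)]
  note nz = tt_nz
  have c: "tt * (1 + tt) \<noteq> 0" using nz by simp
  have e11: "g1 A 1 = g1 B 1" using arg_cong[OF eq, of "\<lambda>M::K^2^2. M$1$1"] by (simp add: phi_def)
  have e12: "g2 A 1 = g2 B 1" using arg_cong[OF eq, of "\<lambda>M::K^2^2. M$1$2"] by (simp add: phi_def)
  have e21: "g1 A 2 = g1 B 2" using arg_cong[OF eq, of "\<lambda>M::K^2^2. M$2$1"] e11 nz by (simp add: phi_def)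
  have e22: "g2 A 2 = g2 B 2" using arg_cong[OF eq, of "\<lambda>M::K^2^2. M$2$2"] e12 nz by (simp add: phi_def)
  have f1: "fk1 A k = fk1 B k" if "g1 A k = g1 B k" for k using that c by (simp add: g1_def)
  have f2: "fk2 A k = fk2 B k" if "g2 A k = g2 B k" for k using that c by (simp add: g2_def)
  have a1: "A$k$1 = B$k$1" if "fk1 A k = fk1 B k" for k using that nz by (simp add: fk1_def)
  have a2: "A$k$2 = B$k$2" if "fk2 A k = fk2 B k" "A$k$1 = B$k$1" for k using that nz by (simp add: fk2_def)
  have x11: "A$1$1 = B$1$1" by (rule a1[OF f1[OF e11]])
  have x21: "A$2$1 = B$2$1" by (rule a1[OF f1[OF e21]])
  have x12: "A$1$2 = B$1$2" by (rule a2[OF f2[OF e12] x11])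
  have x22: "A$2$2 = B$2$2" by (rule a2[OF f2[OF e22] x21])
  show ?thesis
    unfolding vec_eq_iff forall_3 by (simp add: ca cb x11 x12 x21 x22)
qed


lemma phi_entries:
  fixes A :: "K^3^3"
  assumes "\<forall>i j. A$i$j \<in> laurent"
  shows "\<forall>i j. phi A $ i $ j \<in> laurent_loc"
proof -
  have l3: "1 + tt + tt^2 \<in> laurent" "1 + tt \<in> laurent"
    by (intro laurent_add laurent_one laurent_tt laurent_power)+
  have g: "g1 A k \<in> laurent_loc" "g2 A k \<in> laurent_loc" for k
    unfolding g1_def g2_def fk1_def fk2_def ginv
    by (intro loc_mult loc_of loc_iu laurent_mult laurent_diff laurent_add laurent_itt l3 laurent_one assms[rule_format])+
  have "inverse tt * g1 A 1 + (1 + tt) * g1 A 2 \<in> laurent_loc"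
       "inverse tt * g2 A 1 + (1 + tt) * g2 A 2 \<in> laurent_loc"
    by (intro loc_add loc_mult loc_of laurent_itt g l3)+
  then show ?thesis unfolding forall_2 phi_def using g by simp
qed

theorem lemma3p4:
  shows "(\<forall>A \<in> burau. phi A \<in> GL_over laurent_loc)
       \<and> (\<forall>A \<in> burau. \<forall>B \<in> burau. phi (A ** B) = phi A ** phi B)
       \<and> inj_on phi burau
       \<and> (\<forall>A \<in> burau. det (phi A) = det A)"
proof (intro conjI ballI)
  fix A :: "K^3^3" assume "A \<in> burau"
  then have gl: "A \<in> GL_over laurent" and v: "vrow v* A = vrow" and o: "A *v ones3 = ones3"
    by (auto simp: burau_def)
  from gl obtain B :: "K^3^3" where ent: "\<forall>i j. A$i$j \<in> laurent" and bent: "\<forall>i j. B$i$j \<in> laurent"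
    and ab: "A ** B = mat 1" and ba: "B ** A = mat 1" unfolding GL_over_def by blast
  have vb: "vrow v* B = vrow"
    by (metis v ab vector_matrix_mul_assoc vector_matrix_mul_rid)
  have ob: "B *v ones3 = ones3"
    by (metis o ba matrix_vector_mul_assoc matrix_vector_mul_lid)
  have "phi A ** phi B = mat 1" using hom[OF v o vb ob] ab phi_one by simp
  moreover have "phi B ** phi A = mat 1" using hom[OF vb ob v o] ba phi_one by simp
  ultimately show "phi A \<in> GL_over laurent_loc"
    unfolding GL_over_def using phi_entries[OF ent] phi_entries[OF bent] by blast
  show "det (phi A) = det A" by (rule det_eq[OF v o])
next
  fix A B assume "A \<in> burau" "B \<in> burau"
  then show "phi (A ** B) = phi A ** phi B" by (intro hom) (auto simp: burau_def)
next
  show "inj_on phi burau"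
    by (rule inj_onI, rule phi_inj) (auto simp: burau_def)
qed

end
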